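(* Let $q$ be a power of a prime $p$, let $n \geq 2$, let $\zeta$ be a primitive element of $\mathbb{F}_{q^n}$ and let $w \in \{0,1,\ldots,n\}$. If $q = 2$, further assume that $w \neq n$. Then $$\sigma_w(\zeta^k) = \mathcal{F}_\zeta[\delta_w](k) \quad \text{for all } k \in \mathbb{Z}_{q^n-1}.$$
   Context: For $0 \le w \le n$, $\sigma_w : \mathbb{F}_{q^n} \to \mathbb{F}_q$ is defined by $\sigma_0(\xi) = 1$ and, for $1 \le w \le n$, $\sigma_w(\xi) = \sum_{0 \le i_1 < \cdots < i_w \le n-1} \xi^{q^{i_1} + \cdots + q^{i_w}}$ (so that the characteristic polynomial of $\xi$ over $\mathbb{F}_q$ is $\prod_{k=0}^{n-1}(x - \xi^{q^k}) = \sum_{w=0}^n (-1)^w \sigma_w(\xi) x^{n-w}$). Define $\Omega(0) = \{0\} \subseteq \mathbb{Z}_{q^n-1}$ and, for $1 \le w \le n$, $\Omega(w)$ is the set of $k \in \mathbb{Z}_{q^n-1}$ whose canonical representative in $\{0,1,\ldots,q^n-2\}$ equals $q^{i_1} + \cdots + q^{i_w}$ for some integers $0 \le i_1 < \cdots < i_w \le n-1$. Then $\delta_w : \mathbb{Z}_{q^n-1} \to \{0,1\} \subseteq \mathbb{F}_p$ is the indicator function of $\Omega(w)$. For $N \mid q^n-1$, a primitive $N$-th root of unity $\zeta_N \in \mathbb{F}_{q^n}$, and $f : \mathbb{Z}_N \to \mathbb{F}_{q^n}$, the discrete Fourier transform is $\mathcal{F}_{\zeta_N}[f](i) = \sum_{j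 \in \mathbb{Z}_N} f(j)\zeta_N^{ij}$; here $N = q^n-1$ and $\zeta_N = \zeta$. *)

theory Defs
  imports "HOL-Computational_Algebra.Primes"
begin

text \<open>The finite field F_{q^n} is modelled by a finite field type 'a with CARD('a) = q^n.
  Elements of Z_{q^n-1} are represented by their canonical representatives in {0..<q^n-1}.\<close>

definition sigma_w :: "nat \<Rightarrow> nat \<Rightarrow> nat \<Rightarrow> 'a::field \<Rightarrow> 'a" where
  "sigma_w q n w \<xi> = (\<Sum>S\<in>{S. S \<subseteq> {..<n} \<and> card S = w}. \<xi> ^ (\<Sum>i\<in>S. q ^ i))"

definition Omega :: "nat \<Rightarrow> nat \<Rightarrow> nat \<Rightarrow> nat set" where
  "Omega q n w = (if w = 0 then {0} else
     {k. k < q ^ n - 1 \<and> (\<exists>S. S \<subseteq> {..<n} \<and> card S = w \<and> k = (\<Sum>i\<in>S. q ^ i))})"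

definition delta_w :: "nat \<Rightarrow> nat \<Rightarrow> nat \<Rightarrow> nat \<Rightarrow> 'a::field" where
  "delta_w q n w k = (if k \<in> Omega q n w then 1 else 0)"

definition dft :: "'a::field \<Rightarrow> nat \<Rightarrow> (nat \<Rightarrow> 'a) \<Rightarrow> nat \<Rightarrow> 'a" where
  "dft zeta N f i = (\<Sum>j<N. f j * zeta ^ (i * j))"

definition primitive_element :: "'a::{field,finite} \<Rightarrow> bool" where
  "primitive_element \<zeta> \<longleftrightarrow> \<zeta> \<noteq> 0 \<and> (\<forall>x. x \<noteq> 0 \<longrightarrow> (\<exists>k::nat. x = \<zeta> ^ k))"

end

theory Submission
  imports Defs
begin

lemma geo_lt: "(q::nat) \<ge> 2 \<Longrightarrow> (\<Sum>i<n. q^i) < q^n"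
proof (induction n)
  case 0 then show ?case by simp
next
  case (Suc n)
  have "(\<Sum>i<Suc n. q^i) = (\<Sum>i<n. q^i) + q^n" by simp
  also have "\<dots> < 2 * q^n" using Suc by simp
  also have "\<dots> \<le> q * q^n" using Suc.prems by simp
  finally show ?case by simp
qed

lemma sub_lt: "(q::nat) \<ge> 2 \<Longrightarrow> S \<subseteq> {..<n} \<Longrightarrow> (\<Sum>i\<in>S. q^i) < q^n"
proof -
  assume q: "q \<ge> 2" and S: "S \<subseteq> {..<n}"
  have "(\<Sum>i\<in>S. q^i) \<le> (\<Sum>i<n. q^i)" by (rule sum_mono2) (use S in auto)
  with geo_lt[OF q, of n] show ?thesis by linarith
qed

lemma split_top: "S \<subseteq> {..<Suc n} \<Longrightarrow>
  (\<Sum>i\<in>S. (q::nat)^i) = (if n \<in> S then q^n else 0) + (\<Sum>i\<in>S-{n}. q^i)"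
proof -
  assume S: "S \<subseteq> {..<Suc n}"
  have fin: "finite S" using S finite_subset by blast
  show ?thesis
  proof (cases "n \<in> S")
    case True
    then show ?thesis using sum.remove[OF fin True, of "\<lambda>i. q^i"] by simp
  next
    case False
    then show ?thesis by simp
  qed
qed

lemma digits_inj: "(q::nat) \<ge> 2 \<Longrightarrow> S \<subseteq> {..<n} \<Longrightarrow> T \<subseteq> {..<n} \<Longrightarrow>
   (\<Sum>i\<in>S. q^i) = (\<Sum>i\<in>T. q^i) \<Longrightarrow> S = T"
proof (induction n arbitrary: S T)
  case 0 then show ?case by auto
next
  case (Suc n)
  have S': "S - {n} \<subseteq> {..<n}" and T': "T - {n} \<subseteq> {..<n}"
    using Suc.prems by (auto simp: less_Suc_eq)
  note eS = split_top[OF Suc.prems(2), of q] and eT = split_top[OF Suc.prems(3), of q]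
  have lS: "(\<Sum>i\<in>S-{n}. q^i) < q^n" by (rule sub_lt[OF Suc.prems(1) S'])
  have lT: "(\<Sum>i\<in>T-{n}. q^i) < q^n" by (rule sub_lt[OF Suc.prems(1) T'])
  have same: "(n \<in> S) = (n \<in> T)"
  proof (rule ccontr)
    assume "(n \<in> S) \<noteq> (n \<in> T)"
    note ne = this
    show False
    proof (cases "n \<in> S")
      case True
      then have nT: "n \<notin> T" using ne by simp
      have "(\<Sum>i\<in>T. q^i) = (\<Sum>i\<in>T-{n}. q^i)" using eT nT by simp
      moreover have "(\<Sum>i\<in>S. q^i) \<ge> q^n" using eS True by simp
      ultimately show False using lT Suc.prems(4) by linarith
    next
      case False
      then have nT: "n \<in> T" using ne by simp
      have "(\<Sum>i\<in>S. q^i) = (\<Sum>i\<in>S-{n}. q^i)" using eS False by simp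
      moreover have "(\<Sum>i\<in>T. q^i) \<ge> q^n" using eT nT by simp
      ultimately show False using lS Suc.prems(4) by linarith
    qed
  qed
  then have "(\<Sum>i\<in>S-{n}. q^i) = (\<Sum>i\<in>T-{n}. q^i)" using eS eT Suc.prems(4) by simp
  then have "S - {n} = T - {n}" using Suc.IH[OF Suc.prems(1) S' T'] by simp
  then show ?case using same by blast
qed

lemma bound_N:
  assumes q: "(q::nat) \<ge> 2" and S: "S \<subseteq> {..<n}" and n: "n \<ge> 1"
    and nq: "\<not> (q = 2 \<and> S = {..<n})"
  shows "(\<Sum>i\<in>S. q^i) < q^n - 1"
proof (cases "S = {..<n}")
  case False
  then obtain j where j: "j < n" "j \<notin> S" using S by blast
  have "(\<Sum>i\<in>S. q^i) + q^j = (\<Sum>i\<in>insert j S. q^i)"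
    using j S finite_subset by (subst sum.insert) auto
  also have "\<dots> \<le> (\<Sum>i<n. q^i)" by (rule sum_mono2) (use S j in auto)
  finally have "(\<Sum>i\<in>S. q^i) + q^j < q^n" using geo_lt[OF q, of n] by linarith
  moreover have "q^j \<ge> 1" using q by simp
  ultimately show ?thesis by linarith
next
  case True
  then have q3: "q \<ge> 3" using nq q by auto
  have geo: "(\<Sum>i<n. q^i) * (q - 1) + 1 = q^n" for n
  proof (induction n)
    case 0 then show ?case by simp
  next
    case (Suc n)
    have "(\<Sum>i<Suc n. q^i) * (q - 1) + 1 = ((\<Sum>i<n. q^i) * (q - 1) + 1) + q^n * (q - 1)"
      by (simp add: algebra_simps)
    also have "\<dots> = q^n + q^n * (q-1)" using Suc by simp
    also have "\<dots> = q^n * q" using q by (cases q) (auto simp: algebra_simps)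
    finally show ?case by (simp add: mult.commute)
  qed
  have pos: "(\<Sum>i<n. q^i) \<ge> 1"
  proof -
    have "(\<Sum>i<n. q^i) \<ge> (\<Sum>i\<in>{0}. q^i)" by (rule sum_mono2) (use n in auto)
    then show ?thesis by simp
  qed
  have "(2::nat) \<le> q - 1" using q3 by simp
  then have "(\<Sum>i<n. q^i) * 2 \<le> (\<Sum>i<n. q^i) * (q - 1)" by (rule mult_left_mono) simp
  moreover define s where "s = (\<Sum>i<n. q^i)"
  ultimately have "s * 2 \<le> s * (q - 1)" "s * (q - 1) + 1 = q ^ n" "1 \<le> s" using geo[of n] pos by auto
  then have "s < q ^ n - 1" by linarith
  then show ?thesis using True s_def by simp
qed

theorem lemma3p1:
  fixes \<zeta> :: "'a::{field,finite}" and p q n m w :: nat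
  assumes "prime p" and "m \<ge> 1" and "q = p ^ m"
    and "card (UNIV :: 'a set) = q ^ n" and "n \<ge> 2"
    and "primitive_element \<zeta>"
    and "w \<le> n" and "q = 2 \<longrightarrow> w \<noteq> n"
  shows "\<forall>k < q ^ n - 1. sigma_w q n w (\<zeta> ^ k) = dft \<zeta> (q ^ n - 1) (delta_w q n w) k"
proof (intro allI impI)
  fix k assume k: "k < q ^ n - 1"
  have p2: "p \<ge> 2" using assms(1) prime_ge_2_nat by blast
  have "p ^ 1 \<le> p ^ m" using assms(2) p2 by (intro power_increasing) auto
  then have q: "q \<ge> 2" using assms(3) p2 by simp
  define N where "N = q ^ n - 1"
  define F where "F = {S. S \<subseteq> {..<n} \<and> card S = w}"
  define g where "g = (\<lambda>S. \<Sum>i\<in>S. q ^ i)"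
  have "dft \<zeta> N (delta_w q n w) k = (\<Sum>j\<in>{..<N} \<inter> Omega q n w. \<zeta> ^ (k * j))"
    unfolding dft_def delta_w_def by (simp add: sum.inter_restrict if_distrib[of "\<lambda>x. x * _"] cong: if_cong)
  also have "{..<N} \<inter> Omega q n w = Omega q n w"
  proof -
    have "q ^ 2 \<le> q ^ n" using q assms(5) by (intro power_increasing) auto
    moreover have "(2::nat) ^ 2 \<le> q ^ 2" using q by (intro power_mono) auto
    ultimately have "q ^ n \<ge> 4" by simp
    then show ?thesis unfolding Omega_def N_def by auto
  qed
  finally have D: "dft \<zeta> N (delta_w q n w) k = (\<Sum>j\<in>Omega q n w. \<zeta> ^ (k * j))" .
  show "sigma_w q n w (\<zeta> ^ k) = dft \<zeta> (q ^ n - 1) (delta_w q n w) k"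
  proof (cases "w = 0")
    case True
    have "F = {{}}" unfolding F_def using True by (auto simp: card_eq_0_iff finite_subset)
    then show ?thesis using D True unfolding sigma_w_def F_def N_def by (simp add: Omega_def)
  next
    case False
    have "Omega q n w = g ` F"
    proof
      show "Omega q n w \<subseteq> g ` F" using False unfolding Omega_def F_def g_def by auto
      show "g ` F \<subseteq> Omega q n w"
      proof
        fix x assume "x \<in> g ` F"
        then obtain S where S: "S \<subseteq> {..<n}" "card S = w" "x = g S" unfolding F_def by auto
        have "\<not> (q = 2 \<and> S = {..<n})" using assms(8) S(2) by auto
        then have "x < q ^ n - 1" using bound_N[OF q S(1)] assms(5) S(3) g_def by auto
        then show "x \<in> Omega q n w" using False S unfolding Omega_def g_def by auto
      qed
    qed
    moreover have "inj_on g F"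
      unfolding inj_on_def F_def g_def using digits_inj[OF q] by blast
    ultimately have "(\<Sum>j\<in>Omega q n w. \<zeta> ^ (k * j)) = (\<Sum>S\<in>F. \<zeta> ^ (k * g S))"
      by (simp add: sum.reindex)
    also have "\<dots> = sigma_w q n w (\<zeta> ^ k)"
      unfolding sigma_w_def F_def g_def by (simp add: power_mult)
    finally show ?thesis using D N_def by simp
  qed
qed

end
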